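(* Let $\mathcal X$ be an Ahlfors $n$-regular space with $n>0$ and let $s\in(0,n)$. Then for every $u\in\dot{\mathcal B}^s_{n/s}(\mathcal X)$ there exists a set $F\subset\mathcal X$ such that $\mathcal X\setminus F$ has Hausdorff dimension zero and $\widetilde u(x)=\lim_{r\to0}\fint_{B(x,r)}u\,d\mu$ exists for all $x\in F$.
   Context: Metric measure space: $d$ metric, $\mu$ regular Borel, balls of finite positive measure; $\fint_Bu\,d\mu=\mu(B)^{-1}\int_Bu\,d\mu$. Ahlfors $n$-regular: $\mu(B(x,r))\sim r^n$ for all $x$, $0<r<2\operatorname{diam}\mathcal X$. $V(x,y)=\mu(B(x,d(x,y)))$; for $p\ge1$, $\dot{\mathcal B}^s_p(\mathcal X)$ is the set of $u\in L^p_{\rm loc}(\mathcal X)$ with $\int_{\mathcal X}\int_{\mathcal X}\frac{|u(x)-u(y)|^p}{d(x,y)^{sp}V(x,y)}d\mu(y)d\mu(x)<\infty$. *)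

theory Defs
  imports "HOL-Analysis.Analysis"
begin

definition mm_space :: "'a::metric_space measure \<Rightarrow> bool" where
  "mm_space \<mu> \<longleftrightarrow> sets \<mu> = sets borel
     \<and> (\<forall>A\<in>sets \<mu>. emeasure \<mu> A = (INF U\<in>{U. open U \<and> A \<subseteq> U}. emeasure \<mu> U))
     \<and> (\<forall>x r. r > 0 \<longrightarrow> 0 < emeasure \<mu> (ball x r) \<and> emeasure \<mu> (ball x r) < \<infinity>)"

definition ahlfors_regular :: "'a::metric_space measure \<Rightarrow> real \<Rightarrow> bool" where
  "ahlfors_regular \<mu> n \<longleftrightarrow> (\<exists>C\<ge>1. \<forall>x r. 0 < r \<and> (\<not> bounded (UNIV::'a set) \<or> r < 2 * diameter (UNIV::'a set))
      \<longrightarrow> r powr n / C \<le> measure \<mu> (ball x r) \<and> measure \<mu> (ball x r) \<le> C * r powr n)"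

definition V :: "'a::metric_space measure \<Rightarrow> 'a \<Rightarrow> 'a \<Rightarrow> real" where
  "V \<mu> x y = measure \<mu> (ball x (dist x y))"

definition Lp_loc :: "'a::metric_space measure \<Rightarrow> real \<Rightarrow> ('a \<Rightarrow> real) \<Rightarrow> bool" where
  "Lp_loc \<mu> p u \<longleftrightarrow> u \<in> borel_measurable \<mu> \<and>
     (\<forall>x r. r > 0 \<longrightarrow> (\<integral>\<^sup>+ y. ennreal (\<bar>u y\<bar> powr p) * indicator (ball x r) y \<partial>\<mu>) < \<infinity>)"

definition besov :: "'a::metric_space measure \<Rightarrow> real \<Rightarrow> real \<Rightarrow> ('a \<Rightarrow> real) set" where
  "besov \<mu> s p = {u. Lp_loc \<mu> p u \<and>
     (\<integral>\<^sup>+ x. (\<integral>\<^sup>+ y. ennreal (\<bar>u x - u y\<bar> powr p / (dist x y powr (s * p) * V \<mu> x y)) \<partial>\<mu>) \<partial>\<mu>) < \<infinity>}"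

definition ball_avg :: "'a::metric_space measure \<Rightarrow> ('a \<Rightarrow> real) \<Rightarrow> 'a \<Rightarrow> real \<Rightarrow> real" where
  "ball_avg \<mu> u x r = (LINT y:ball x r|\<mu>. u y) / measure \<mu> (ball x r)"

definition hausdorff_pre :: "real \<Rightarrow> real \<Rightarrow> 'a::metric_space set \<Rightarrow> ennreal" where
  "hausdorff_pre t \<delta> E = Inf {\<Sum>i. ennreal (diameter (C i) powr t) | C :: nat \<Rightarrow> 'a set.
      (\<forall>i. bounded (C i) \<and> diameter (C i) \<le> \<delta>) \<and> E \<subseteq> (\<Union>i. C i)}"

definition hausdorff_measure :: "real \<Rightarrow> 'a::metric_space set \<Rightarrow> ennreal" where
  "hausdorff_measure t E = (SUP \<delta>\<in>{0<..}. hausdorff_pre t \<delta> E)"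

definition hausdorff_dim_zero :: "'a::metric_space set \<Rightarrow> bool" where
  "hausdorff_dim_zero E \<longleftrightarrow> (\<forall>t>0. hausdorff_measure t E = 0)"

end

theory Submission
  imports Defs
begin

lemma nn_superadd:
  "integral\<^sup>N M f + integral\<^sup>N M g \<le> (\<integral>\<^sup>+ x. f x + g x \<partial>M)"
proof -
  let ?A = "{a. simple_function M a \<and> a \<le> f}"
  let ?B = "{b. simple_function M b \<and> b \<le> g}"
  have ne: "?A \<noteq> {}" "?B \<noteq> {}" by (auto intro!: exI[of _ "\<lambda>_. 0"] simp: le_fun_def)
  have "integral\<^sup>N M f + integral\<^sup>N M g = (SUP a\<in>?A. SUP b\<in>?B. integral\<^sup>S M a + integral\<^sup>S M b)"
    unfolding nn_integral_def
    by (subst ennreal_SUP_add_left[symmetric, OF ne(1)])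
       (simp add: ennreal_SUP_add_right[OF ne(2)])
  also have "\<dots> \<le> (\<integral>\<^sup>+ x. f x + g x \<partial>M)"
  proof (intro SUP_least)
    fix a b assume a: "a \<in> ?A" and b: "b \<in> ?B"
    then have "integral\<^sup>S M a + integral\<^sup>S M b = (\<integral>\<^sup>Sx. a x + b x \<partial>M)" by simp
    also have "\<dots> \<le> (\<integral>\<^sup>+ x. f x + g x \<partial>M)"
      unfolding nn_integral_def
      by (rule SUP_upper) (use a b in \<open>auto simp: le_fun_def intro: add_mono\<close>)
    finally show "integral\<^sup>S M a + integral\<^sup>S M b \<le> (\<integral>\<^sup>+ x. f x + g x \<partial>M)" .
  qed
  finally show ?thesis .
qed

lemma nn_superadd_sum:
  assumes "finite Q"
  shows "(\<Sum>q\<in>Q. integral\<^sup>N M (f q)) \<le> (\<integral>\<^sup>+ x. (\<Sum>q\<in>Q. f q x) \<partial>M)"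
  using assms
proof induct
  case empty then show ?case by simp
next
  case (insert q Q)
  have "(\<Sum>q\<in>insert q Q. integral\<^sup>N M (f q)) = integral\<^sup>N M (f q) + (\<Sum>q\<in>Q. integral\<^sup>N M (f q))"
    using insert by simp
  also have "\<dots> \<le> integral\<^sup>N M (f q) + (\<integral>\<^sup>+ x. (\<Sum>q\<in>Q. f q x) \<partial>M)"
    using insert by (intro add_mono) auto
  also have "\<dots> \<le> (\<integral>\<^sup>+ x. f q x + (\<Sum>q\<in>Q. f q x) \<partial>M)" by (rule nn_superadd)
  also have "\<dots> = (\<integral>\<^sup>+ x. (\<Sum>q\<in>insert q Q. f q x) \<partial>M)" using insert by simp
  finally show ?case .
qed

lemma nn_cmult_le:
  fixes c :: ennreal
  assumes "c < \<infinity>"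
  shows "(\<integral>\<^sup>+ x. c * f x \<partial>M) \<le> c * integral\<^sup>N M f"
proof (cases "c = 0")
  case True then show ?thesis by simp
next
  case False
  show ?thesis
    unfolding nn_integral_def[of M "\<lambda>x. c * f x"]
  proof (intro SUP_least, clarify)
    fix s assume s: "simple_function M s" "s \<le> (\<lambda>x. c * f x)"
    define s' where "s' = (\<lambda>x. inverse c * s x)"
    have cc: "c * inverse c = 1" using False assms ennreal_divide_self[of c]
      by (simp add: divide_ennreal_def)
    have sc: "\<And>x. s x = c * s' x" unfolding s'_def using cc
      by (simp add: mult.assoc[symmetric])
    have ss': "simple_function M s'" unfolding s'_def using s(1) by auto
    have le: "s' \<le> f"
    proof (rule le_funI)
      fix x
      have "s' x = inverse c * s x" by (simp add: s'_def)
      also have "\<dots> \<le> inverse c * (c * f x)" using s(2) by (auto simp: le_fun_def intro: mult_left_mono)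
      also have "\<dots> = f x" using cc by (simp add: mult.assoc[symmetric] mult.commute)
      finally show "s' x \<le> f x" .
    qed
    have "integral\<^sup>S M s = c * integral\<^sup>S M s'"
      using sc ss' by (simp add: sc[abs_def])
    also have "\<dots> \<le> c * integral\<^sup>N M f"
      by (intro mult_left_mono) (use ss' le in \<open>auto simp: nn_integral_def intro!: SUP_upper\<close>)
    finally show "integral\<^sup>S M s \<le> c * integral\<^sup>N M f" .
  qed
qed


locale AR =
  fixes \<mu> :: "'a::metric_space measure" and C R0 n :: real
  assumes sets_mu: "sets \<mu> = sets borel"
  and fin: "\<And>x r. r > 0 \<Longrightarrow> emeasure \<mu> (ball x r) < \<infinity>"
  and C1: "C \<ge> 1" and R0: "0 < R0" "R0 \<le> 1" and npos: "n > 0"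
  and lower: "\<And>x r. 0 < r \<Longrightarrow> r \<le> 4*R0 \<Longrightarrow> r powr n / C \<le> measure \<mu> (ball x r)"
  and upper: "\<And>x r. 0 < r \<Longrightarrow> r \<le> 4*R0 \<Longrightarrow> measure \<mu> (ball x r) \<le> C * r powr n"
begin

lemma space_mu[simp]: "space \<mu> = UNIV"
  using sets_eq_imp_space_eq[OF sets_mu] by simp

lemma meas_borel[measurable_cong]: "sets \<mu> = sets borel" by (rule sets_mu)

lemma ball_sets[measurable]: "ball x r \<in> sets \<mu>"
  using sets_mu by simp

lemma ball_fmeas: "r > 0 \<Longrightarrow> ball x r \<in> fmeasurable \<mu>"
  using fin by (intro fmeasurableI) auto

lemma sigma_fin: "sigma_finite_measure \<mu>"
proof
  fix x0 :: 'a
  show "\<exists>A. countable A \<and> A \<subseteq> sets \<mu> \<and> \<Union> A = space \<mu> \<and> (\<forall>a\<in>A. emeasure \<mu> a \<noteq> \<infinity>)"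
  proof (intro exI[of _ "range (\<lambda>m::nat. ball x0 (real m + 1))"] conjI)
    show "\<Union> (range (\<lambda>m::nat. ball x0 (real m + 1))) = space \<mu>"
    proof (intro equalityI subsetI)
      fix y :: 'a assume "y \<in> space \<mu>"
      obtain m :: nat where "dist x0 y < real m" using reals_Archimedean2[of "dist x0 y"] by blast
      then have "y \<in> ball x0 (real m + 1)" by simp
      then show "y \<in> \<Union> (range (\<lambda>m::nat. ball x0 (real m + 1)))" by blast
    qed simp
    show "countable (range (\<lambda>m::nat. ball x0 (real m + 1)))" by simp
    show "range (\<lambda>m::nat. ball x0 (real m + 1)) \<subseteq> sets \<mu>" by auto
    show "\<forall>a\<in>range (\<lambda>m::nat. ball x0 (real m + 1)). emeasure \<mu> a \<noteq> \<infinity>"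
      using fin by (auto simp: less_top)
  qed
qed

lemma card_sep:
  assumes "finite S" "S \<subseteq> ball y R" "\<And>p q. p\<in>S \<Longrightarrow> q\<in>S \<Longrightarrow> p \<noteq> q \<Longrightarrow> r \<le> dist p q"
    "0 < r" "r \<le> 8*R0"
  shows "real (card S) * ((r/2) powr n / C) \<le> measure \<mu> (ball y (R + r/2))"
proof (cases "S = {}")
  case True then show ?thesis by simp
next
  case False
  then obtain q where "q \<in> S" by auto
  then have "dist y q < R" using assms(2) by auto
  then have R: "0 < R" using zero_le_dist[of y q] by linarith
  have disj: "disjoint_family_on (\<lambda>q. ball q (r/2)) S"
    unfolding disjoint_family_on_def
  proof (intro ballI impI)
    fix p q assume pq: "p \<in> S" "q \<in> S" "p \<noteq> q"
    show "ball p (r/2) \<inter> ball q (r/2) = {}"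
    proof (rule ccontr)
      assume "ball p (r/2) \<inter> ball q (r/2) \<noteq> {}"
      then obtain z where "dist p z < r/2" "dist q z < r/2" by auto
      then have "dist p q < r" using dist_triangle3[of p q z] dist_commute[of z p] dist_commute[of z q] by linarith
      with assms(3)[OF pq] show False by simp
    qed
  qed
  have "real (card S) * ((r/2) powr n / C) = (\<Sum>q\<in>S. (r/2) powr n / C)" by simp
  also have "\<dots> \<le> (\<Sum>q\<in>S. measure \<mu> (ball q (r/2)))"
    by (intro sum_mono lower) (use assms in auto)
  also have "\<dots> = measure \<mu> (\<Union>q\<in>S. ball q (r/2))"
    by (rule measure_finite_Union[symmetric]) (use assms disj fin in \<open>auto simp: less_top\<close>)
  also have "\<dots> \<le> measure \<mu> (ball y (R + r/2))"
  proof (rule measure_mono_fmeasurable)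
    show "(\<Union>q\<in>S. ball q (r/2)) \<subseteq> ball y (R + r/2)"
    proof clarify
      fix q z assume "q \<in> S" "z \<in> ball q (r/2)"
      then have "dist y q < R" "dist q z < r/2" using assms(2) by auto
      then show "z \<in> ball y (R + r/2)" using dist_triangle[of y z q] by simp
    qed
    show "(\<Union>q\<in>S. ball q (r/2)) \<in> sets \<mu>" using assms(1) by (auto intro: sets.finite_UN)
    show "ball y (R + r/2) \<in> fmeasurable \<mu>"
      using R assms(4) by (intro ball_fmeas) simp
  qed
  finally show ?thesis .
qed

end

context AR begin

lemma sep_finite:
  fixes S :: "'a set"
  assumes "S \<subseteq> ball y R" "\<And>p q. p\<in>S \<Longrightarrow> q\<in>S \<Longrightarrow> p \<noteq> q \<Longrightarrow> r \<le> dist p q"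
    "0 < r" "r \<le> 8*R0"
  shows "finite S"
proof -
  define m where "m = measure \<mu> (ball y (R + r/2))"
  have cpos: "0 < (r/2) powr n / C" using assms(3) C1 by simp
  have "finite S \<and> card S \<le> nat \<lceil>m / ((r/2) powr n / C)\<rceil>"
  proof (rule finite_if_finite_subsets_card_bdd)
    fix G assume G: "G \<subseteq> S" "finite G"
    have "real (card G) * ((r/2) powr n / C) \<le> m"
      unfolding m_def
    proof (rule card_sep)
      show "G \<subseteq> ball y R" using G assms by blast
      show "\<And>p q. p\<in>G \<Longrightarrow> q\<in>G \<Longrightarrow> p \<noteq> q \<Longrightarrow> r \<le> dist p q"
        using G assms(2) by blast
    qed (use G assms in auto)
    then have "real (card G) \<le> m / ((r/2) powr n / C)"
      by (simp only: pos_le_divide_eq[OF cpos])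
    then show "card G \<le> nat \<lceil>m / ((r/2) powr n / C)\<rceil>"
      by linarith
  qed
  then show ?thesis by simp
qed

lemma net_exists:
  assumes "0 < r"
  shows "\<exists>N::'a set. (\<forall>p\<in>N. \<forall>q\<in>N. p \<noteq> q \<longrightarrow> r \<le> dist p q) \<and> (\<forall>x. \<exists>q\<in>N. dist x q < r)"
proof -
  define A where "A = {S::'a set. \<forall>p\<in>S. \<forall>q\<in>S. p \<noteq> q \<longrightarrow> r \<le> dist p q}"
  have "\<forall>C\<in>chains A. \<Union>C \<in> A"
  proof
    fix Ch assume Ch: "Ch \<in> chains A"
    show "\<Union>Ch \<in> A" unfolding A_def mem_Collect_eq
    proof (intro ballI impI)
      fix p q assume "p \<in> \<Union>Ch" "q \<in> \<Union>Ch" "p \<noteq> q"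
      then obtain S1 S2 where S: "S1 \<in> Ch" "S2 \<in> Ch" "p \<in> S1" "q \<in> S2" by auto
      have A1: "S1 \<in> A" "S2 \<in> A" using chainsD2[OF Ch] S by auto
      from chainsD[OF Ch S(1,2)] show "r \<le> dist p q"
      proof
        assume "S1 \<subseteq> S2"
        then have "p \<in> S2" using S by auto
        then show ?thesis using A1(2) S(4) \<open>p \<noteq> q\<close> unfolding A_def by simp
      next
        assume "S2 \<subseteq> S1"
        then have "q \<in> S1" using S by auto
        then show ?thesis using A1(1) S(3) \<open>p \<noteq> q\<close> unfolding A_def by simp
      qed
    qed
  qed
  from Zorn_Lemma[OF this] obtain M where M: "M \<in> A" "\<forall>X\<in>A. M \<subseteq> X \<longrightarrow> X = M" by blast
  have h1: "\<forall>x. \<exists>q\<in>M. dist x q < r"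
  proof (rule ccontr)
    assume "\<not> ?thesis"
    then obtain x where x: "\<forall>q\<in>M. r \<le> dist x q" by (auto simp: not_less)
    have "x \<notin> M"
    proof
      assume "x \<in> M" then have "r \<le> dist x x" using x by blast
      with assms show False by simp
    qed
    have "insert x M \<in> A" unfolding A_def mem_Collect_eq
    proof (intro ballI impI)
      fix p q assume pq: "p \<in> insert x M" "q \<in> insert x M" "p \<noteq> q"
      have MA: "\<forall>p\<in>M. \<forall>q\<in>M. p \<noteq> q \<longrightarrow> r \<le> dist p q" using M(1) unfolding A_def by simp
      show "r \<le> dist p q"
      proof (cases "p = x")
        case True then show ?thesis using pq x by auto
      next
        case False
        then have "p \<in> M" using pq by auto
        show ?thesis
        proof (cases "q = x")
          case True then show ?thesis using \<open>p \<in> M\<close> x by (simp add: dist_commute)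
        next
          case False then show ?thesis using \<open>p \<in> M\<close> pq MA by auto
        qed
      qed
    qed
    with M(2) have "insert x M = M" by blast
    with \<open>x \<notin> M\<close> show False by blast
  qed
  have h2: "\<forall>p\<in>M. \<forall>q\<in>M. p \<noteq> q \<longrightarrow> r \<le> dist p q" using M(1) unfolding A_def by simp
  have "(\<forall>p\<in>M. \<forall>q\<in>M. p \<noteq> q \<longrightarrow> r \<le> dist p q) \<and> (\<forall>x. \<exists>q\<in>M. dist x q < r)" using h2 h1 by (rule conjI)
  then show ?thesis by (rule exI)
qed

lemma net_countable:
  fixes N :: "'a set"
  assumes "\<forall>p\<in>N. \<forall>q\<in>N. p \<noteq> q \<longrightarrow> r \<le> dist p q" "0 < r" "r \<le> 8*R0"
  shows "countable N"
proof (cases "N = {}")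
  case True then show ?thesis by simp
next
  case False
  then obtain x0 where "x0 \<in> N" by auto
  have eq: "N = (\<Union>m::nat. N \<inter> ball x0 (real m + 1))"
  proof (intro equalityI subsetI)
    fix y assume "y \<in> N"
    obtain m :: nat where "dist x0 y < real m" using reals_Archimedean2[of "dist x0 y"] by blast
    then have "y \<in> N \<inter> ball x0 (real m + 1)" using \<open>y \<in> N\<close> by auto
    then show "y \<in> (\<Union>m::nat. N \<inter> ball x0 (real m + 1))" by blast
  qed auto
  have "\<And>m::nat. finite (N \<inter> ball x0 (real m + 1))"
  proof -
    fix m :: nat
    show "finite (N \<inter> ball x0 (real m + 1))"
    proof (rule sep_finite[of _ x0 "real m + 1" r])
      show "N \<inter> ball x0 (real m + 1) \<subseteq> ball x0 (real m + 1)" by (rule Int_lower2)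
      show "\<And>p q. p \<in> N \<inter> ball x0 (real m + 1) \<Longrightarrow> q \<in> N \<inter> ball x0 (real m + 1) \<Longrightarrow> p \<noteq> q \<Longrightarrow> r \<le> dist p q"
        using assms(1) by (meson IntD1)
    qed (fact assms(2), fact assms(3))
  qed
  then have cnt: "countable (\<Union>m::nat. N \<inter> ball x0 (real m + 1))"
    by (intro countable_UN) (auto intro: countable_finite)
  show ?thesis by (subst eq) (fact cnt)
qed

end

definition gfun :: "'a::metric_space measure \<Rightarrow> ('a \<Rightarrow> real) \<Rightarrow> real \<Rightarrow> real \<Rightarrow> 'a \<Rightarrow> 'a \<Rightarrow> real" where
  "gfun \<mu> u p s y z = \<bar>u y - u z\<bar> powr p / (dist y z powr (s * p) * V \<mu> y z)"

definition Eg :: "'a::metric_space measure \<Rightarrow> ('a \<Rightarrow> real) \<Rightarrow> real \<Rightarrow> real \<Rightarrow> 'a \<Rightarrow> real \<Rightarrow> ennreal" where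
  "Eg \<mu> u p s x r = (\<integral>\<^sup>+ y. \<integral>\<^sup>+ z. ennreal (gfun \<mu> u p s y z) * indicator (ball x r) y * indicator (ball x r) z \<partial>\<mu> \<partial>\<mu>)"

context AR begin

lemma card_overlap:
  fixes Q :: "'a set"
  assumes "finite Q" "\<And>p q. p\<in>Q \<Longrightarrow> q\<in>Q \<Longrightarrow> p \<noteq> q \<Longrightarrow> r \<le> dist p q" "0 < r" "r \<le> R0"
  shows "real (card {q\<in>Q. y \<in> ball q (2*r)}) \<le> C^2 * 5 powr n"
proof -
  let ?Q = "{q\<in>Q. y \<in> ball q (2*r)}"
  have "real (card ?Q) * ((r/2) powr n / C) \<le> measure \<mu> (ball y (2*r + r/2))"
  proof (rule card_sep)
    show "finite ?Q" using assms(1) by simp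
    show "?Q \<subseteq> ball y (2*r)" by (auto simp: dist_commute)
    show "\<And>p q. p\<in>?Q \<Longrightarrow> q\<in>?Q \<Longrightarrow> p \<noteq> q \<Longrightarrow> r \<le> dist p q" using assms(2) by blast
  qed (use assms(3,4) R0 in linarith, use assms(3,4) R0 in linarith)
  also have "\<dots> \<le> C * (2*r + r/2) powr n"
    by (rule upper) (use assms(3,4) R0 in linarith, use assms(3,4) R0 in linarith)
  finally have le: "real (card ?Q) * ((r/2) powr n / C) \<le> C * (5 * (r/2)) powr n" by simp
  have pos: "0 < (r/2) powr n" using assms(3) by simp
  have e: "C * (5 * (r/2)) powr n = (C * 5 powr n) * (r/2) powr n"
    by (subst powr_mult) (use assms(3) in auto)
  define a where "a = (r/2) powr n"
  have apos: "0 < a" using pos a_def by simp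
  have Cpos: "0 < C" using C1 by simp
  from le have "real (card ?Q) * (a / C) \<le> (C * 5 powr n) * a" unfolding a_def e .
  then have "real (card ?Q) * a / C \<le> (C * 5 powr n) * a" by simp
  then have "real (card ?Q) * a \<le> C * ((C * 5 powr n) * a)"
    by (simp only: pos_divide_le_eq[OF Cpos] mult.commute)
  then have "real (card ?Q) * a \<le> (C^2 * 5 powr n) * a" by (simp add: power2_eq_square mult.assoc)
  then show ?thesis using apos by (simp only: mult_le_cancel_right_pos)
qed

lemma overlap:
  fixes Q :: "'a set"
  assumes "finite Q" "\<And>p q. p\<in>Q \<Longrightarrow> q\<in>Q \<Longrightarrow> p \<noteq> q \<Longrightarrow> r \<le> dist p q" "0 < r" "r \<le> R0"
  shows "(\<Sum>q\<in>Q. Eg \<mu> u p s q (2*r)) \<le> ennreal (C^2 * 5 powr n) * (\<integral>\<^sup>+ y. \<integral>\<^sup>+ z. ennreal (gfun \<mu> u p s y z) \<partial>\<mu> \<partial>\<mu>)"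
proof -
  let ?g = "\<lambda>y z. ennreal (gfun \<mu> u p s y z)"
  let ?M = "ennreal (C^2 * 5 powr n)"
  have pw: "(\<Sum>q\<in>Q. ?g y z * indicator (ball q (2*r)) y * indicator (ball q (2*r)) z) \<le> ?M * ?g y z" for y z
  proof -
    let ?Q = "{q\<in>Q. y \<in> ball q (2*r)}"
    have "(\<Sum>q\<in>Q. ?g y z * indicator (ball q (2*r)) y * indicator (ball q (2*r)) z)
        = (\<Sum>q\<in>?Q. ?g y z * indicator (ball q (2*r)) y * indicator (ball q (2*r)) z)"
      using assms(1) by (intro sum.mono_neutral_right) (simp_all add: indicator_def)
    also have "\<dots> \<le> (\<Sum>q\<in>?Q. ?g y z)"
      by (intro sum_mono) (auto simp: indicator_def)
    also have "\<dots> = of_nat (card ?Q) * ?g y z" by simp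
    also have "\<dots> \<le> ?M * ?g y z"
    proof (intro mult_right_mono)
      have "of_nat (card ?Q) = ennreal (real (card ?Q))" by (simp add: ennreal_of_nat_eq_real_of_nat)
      also have "\<dots> \<le> ?M" using card_overlap[OF assms] by (intro ennreal_leI) simp
      finally show "of_nat (card ?Q) \<le> ?M" .
    qed simp
    finally show ?thesis .
  qed
  have "(\<Sum>q\<in>Q. Eg \<mu> u p s q (2*r)) \<le> (\<integral>\<^sup>+ y. (\<Sum>q\<in>Q. \<integral>\<^sup>+ z. ?g y z * indicator (ball q (2*r)) y * indicator (ball q (2*r)) z \<partial>\<mu>) \<partial>\<mu>)"
    unfolding Eg_def by (rule nn_superadd_sum[OF assms(1)])
  also have "\<dots> \<le> (\<integral>\<^sup>+ y. (\<integral>\<^sup>+ z. (\<Sum>q\<in>Q. ?g y z * indicator (ball q (2*r)) y * indicator (ball q (2*r)) z) \<partial>\<mu>) \<partial>\<mu>)"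
    by (intro nn_integral_mono nn_superadd_sum[OF assms(1)])
  also have "\<dots> \<le> (\<integral>\<^sup>+ y. (\<integral>\<^sup>+ z. ?M * ?g y z \<partial>\<mu>) \<partial>\<mu>)"
    by (intro nn_integral_mono pw)
  also have "\<dots> \<le> (\<integral>\<^sup>+ y. ?M * (\<integral>\<^sup>+ z. ?g y z \<partial>\<mu>) \<partial>\<mu>)"
    by (intro nn_integral_mono nn_cmult_le) simp
  also have "\<dots> \<le> ?M * (\<integral>\<^sup>+ y. (\<integral>\<^sup>+ z. ?g y z \<partial>\<mu>) \<partial>\<mu>)"
    by (intro nn_cmult_le) simp
  finally show ?thesis .
qed

end

lemma geom_sum_le:
  fixes \<theta> :: real
  assumes "finite S" "S \<subseteq> {K..}" "0 \<le> \<theta>" "\<theta> < 1"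
  shows "(\<Sum>k\<in>S. \<theta>^k) \<le> \<theta>^K / (1 - \<theta>)"
proof -
  have inj: "inj_on (\<lambda>k. k - K) S" unfolding inj_on_def
  proof (intro ballI impI)
    fix x y assume "x \<in> S" "y \<in> S" "x - K = y - K"
    moreover have "K \<le> x" "K \<le> y" using assms(2) \<open>x \<in> S\<close> \<open>y \<in> S\<close> by auto
    ultimately show "x = y" by arith
  qed
  have "(\<Sum>k\<in>S. \<theta>^k) = (\<Sum>k\<in>S. \<theta>^K * \<theta>^(k - K))"
    using assms(2) by (intro sum.cong) (auto simp: power_add[symmetric])
  also have "\<dots> = \<theta>^K * (\<Sum>k\<in>S. \<theta>^(k - K))" by (simp add: sum_distrib_left)
  also have "(\<Sum>k\<in>S. \<theta>^(k - K)) = (\<Sum>j\<in>(\<lambda>k. k - K) ` S. \<theta>^j)"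
    using sum.reindex[OF inj, of "\<lambda>j. \<theta>^j"] by simp
  also have "\<dots> \<le> (\<Sum>j. \<theta>^j)"
    using assms by (intro sum_le_suminf summable_geometric) auto
  also have "\<dots> = 1 / (1 - \<theta>)" using assms by (intro suminf_geometric) auto
  finally show ?thesis using assms by (simp add: divide_simps mult_left_mono)
qed

lemma pow_powr:
  fixes x :: real assumes "0 \<le> x"
  shows "(x^k) powr t = (x powr t)^k"
  using assms by (induction k) (auto simp: powr_mult)

lemma diam_ball_le:
  fixes q :: "'a::metric_space"
  assumes "0 \<le> r"
  shows "diameter (ball q r) \<le> 2 * r"
proof (cases "ball q r = {}")
  case True then show ?thesis using assms by simp
next
  case False
  have "(SUP (x,y)\<in>ball q r \<times> ball q r. dist x y) \<le> 2 * r"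
  proof (rule cSUP_least)
    show "ball q r \<times> ball q r \<noteq> {}" using False by simp
    fix xy assume "xy \<in> ball q r \<times> ball q r"
    then obtain x y where xy: "xy = (x,y)" "dist q x < r" "dist q y < r" by auto
    have "dist x y \<le> dist q x + dist q y" by (rule dist_triangle3)
    then show "(case xy of (x,y) \<Rightarrow> dist x y) \<le> 2 * r" using xy by simp
  qed
  then show ?thesis using False by (simp add: diameter_def)
qed


context AR begin

lemma Eg_mono_ball:
  assumes "ball x r \<subseteq> ball q r'"
  shows "Eg \<mu> u p s x r \<le> Eg \<mu> u p s q r'"
  unfolding Eg_def
  using assms by (intro nn_integral_mono mult_mono) (auto simp: indicator_def)

lemma cover_key:
  fixes u :: "'a \<Rightarrow> real" and \<tau> \<delta> :: real and K :: nat and A :: "'a set"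
  defines "r \<equiv> \<lambda>k::nat. R0 / 2^k"
  assumes \<tau>: "0 < \<tau>" and \<delta>: "2 * r K \<le> \<delta>"
  and A: "A \<subseteq> {x. \<exists>k\<ge>K. Eg \<mu> u p s x (r k) > ennreal (r k powr \<tau>)}"
  shows "hausdorff_pre (2*\<tau>) \<delta> A \<le> ennreal (2 powr (2*\<tau>) * R0 powr \<tau> * ((1/2) powr \<tau>)^K / (1 - (1/2) powr \<tau>))
            * (ennreal (C^2 * 5 powr n) * (\<integral>\<^sup>+ y. \<integral>\<^sup>+ z. ennreal (gfun \<mu> u p s y z) \<partial>\<mu> \<partial>\<mu>))"
proof -
  let ?I = "\<integral>\<^sup>+ y. \<integral>\<^sup>+ z. ennreal (gfun \<mu> u p s y z) \<partial>\<mu> \<partial>\<mu>"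
  let ?M = "ennreal (C^2 * 5 powr n)"
  define \<theta> where "\<theta> = (1/2::real) powr \<tau>"
  have \<theta>: "0 \<le> \<theta>" "\<theta> < 1" unfolding \<theta>_def
    using \<tau> powr_less_mono2[of \<tau> "1/2" 1] by auto
  have rpos: "0 < r k" for k unfolding r_def using R0 by simp
  have rle: "r k \<le> R0" for k unfolding r_def using R0 by (simp add: divide_le_eq one_le_power[of 2 k] mult_le_cancel_left1)
  have rmono: "k \<ge> K \<Longrightarrow> r k \<le> r K" for k unfolding r_def using R0
    by (intro divide_left_mono) (auto intro: power_increasing)
  have rpow: "r k powr \<tau> = R0 powr \<tau> * \<theta>^k" for k
  proof -
    have "r k = R0 * (1/2)^k" unfolding r_def by (simp add: field_simps)
    then show ?thesis using R0 unfolding \<theta>_def by (simp add: powr_mult pow_powr)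
  qed
  define N where "N k = (SOME N::'a set. (\<forall>p\<in>N. \<forall>q\<in>N. p \<noteq> q \<longrightarrow> r k \<le> dist p q) \<and> (\<forall>x. \<exists>q\<in>N. dist x q < r k))" for k
  have Nsep: "\<And>k p q. p \<in> N k \<Longrightarrow> q \<in> N k \<Longrightarrow> p \<noteq> q \<Longrightarrow> r k \<le> dist p q"
    and Ncov: "\<And>k x. \<exists>q\<in>N k. dist x q < r k"
  proof -
    fix k
    have "\<exists>N::'a set. (\<forall>p\<in>N. \<forall>q\<in>N. p \<noteq> q \<longrightarrow> r k \<le> dist p q) \<and> (\<forall>x. \<exists>q\<in>N. dist x q < r k)"
      by (rule net_exists[OF rpos])
    then have "(\<forall>p\<in>N k. \<forall>q\<in>N k. p \<noteq> q \<longrightarrow> r k \<le> dist p q) \<and> (\<forall>x. \<exists>q\<in>N k. dist x q < r k)"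
      unfolding N_def by (rule someI_ex)
    then show "\<And>p q. p \<in> N k \<Longrightarrow> q \<in> N k \<Longrightarrow> p \<noteq> q \<Longrightarrow> r k \<le> dist p q"
      and "\<And>x. \<exists>q\<in>N k. dist x q < r k" by blast+
  qed
  have Ncnt: "countable (N k)" for k
    by (rule net_countable[of _ "r k"]) (use Nsep in blast, use rpos in blast, use rle[of k] R0 in linarith)
  define P where "P = {(k,q). K \<le> k \<and> q \<in> N k \<and> ennreal (r k powr \<tau>) < Eg \<mu> u p s q (2 * r k)}"
  have Pcnt: "countable P"
  proof (rule countable_subset)
    show "P \<subseteq> (SIGMA k:UNIV. N k)" unfolding P_def by auto
    show "countable (SIGMA k:UNIV. N k)" using Ncnt by (intro countable_SIGMA) auto
  qed
  define e where "e = from_nat_into P"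
  define idx where "idx = to_nat_on P"
  define Cv where "Cv i = (if i \<in> idx ` P then ball (snd (e i)) (r (fst (e i))) else {})" for i
  have eidx: "e (idx pq) = pq" if "pq \<in> P" for pq
    unfolding e_def idx_def using Pcnt that by simp
  have eP: "e i \<in> P" if "i \<in> idx ` P" for i
    using that eidx by auto
  have cov: "A \<subseteq> (\<Union>i. Cv i)"
  proof
    fix x assume "x \<in> A"
    then obtain k where k: "k \<ge> K" "Eg \<mu> u p s x (r k) > ennreal (r k powr \<tau>)" using A by auto
    obtain q where q: "q \<in> N k" "dist x q < r k" using Ncov by blast
    have "ball x (r k) \<subseteq> ball q (2 * r k)"
    proof
      fix z assume "z \<in> ball x (r k)"
      then have "dist x z < r k" by simp
      moreover have "dist q z \<le> dist q x + dist x z" by (rule dist_triangle)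
      ultimately show "z \<in> ball q (2 * r k)" using q(2) by (simp add: dist_commute)
    qed
    then have "Eg \<mu> u p s x (r k) \<le> Eg \<mu> u p s q (2 * r k)" by (rule Eg_mono_ball)
    with k q have kqP: "(k,q) \<in> P" unfolding P_def by auto
    have "Cv (idx (k,q)) = ball q (r k)" unfolding Cv_def using kqP eidx[OF kqP] by auto
    then have "x \<in> Cv (idx (k,q))" using q(2) by (simp add: dist_commute)
    then show "x \<in> (\<Union>i. Cv i)" by blast
  qed
  have Cvb: "bounded (Cv i) \<and> diameter (Cv i) \<le> \<delta>" for i
  proof (cases "i \<in> idx ` P")
    case True
    then obtain k q where kq: "e i = (k,q)" "(k,q) \<in> P" using eP by (metis surj_pair)
    then have "K \<le> k" unfolding P_def by auto
    have "diameter (ball q (r k)) \<le> 2 * r k" by (rule diam_ball_le) (use rpos in \<open>simp add: less_imp_le\<close>)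
    also have "\<dots> \<le> \<delta>" using rmono[OF \<open>K \<le> k\<close>] \<delta> by simp
    finally show ?thesis using True kq by (simp add: Cv_def)
  next
    case False
    then show ?thesis using \<delta> rpos[of K] by (simp add: Cv_def)
  qed
  have hp: "hausdorff_pre (2*\<tau>) \<delta> A \<le> (\<Sum>i. ennreal (diameter (Cv i) powr (2*\<tau>)))"
    unfolding hausdorff_pre_def
    by (rule Inf_lower) (use Cvb cov in blast)
  define B where "B = 2 powr (2*\<tau>) * R0 powr \<tau> * \<theta>^K / (1 - \<theta>)"
  have part: "(\<Sum>i<m. ennreal (diameter (Cv i) powr (2*\<tau>))) \<le> ennreal B * (?M * ?I)" for m
  proof -
    let ?f = "\<lambda>i. ennreal (diameter (Cv i) powr (2*\<tau>))"
    define J where "J = {..<m} \<inter> idx ` P"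
    define F where "F = e ` J"
    have FP: "F \<subseteq> P" unfolding F_def J_def using eP by auto
    have finF: "finite F" unfolding F_def J_def by simp
    have finQ': "finite {q. (k,q) \<in> F}" for k
    proof (rule finite_subset[of _ "snd ` F"])
      show "{q. (k,q) \<in> F} \<subseteq> snd ` F" by force
    qed (use finF in simp)
    have injJ: "inj_on e J" unfolding J_def inj_on_def
      by (auto simp: e_def idx_def Pcnt)
    have "(\<Sum>i<m. ?f i) = (\<Sum>i\<in>J. ?f i)"
      unfolding J_def by (intro sum.mono_neutral_right) (auto simp: Cv_def)
    also have "\<dots> = (\<Sum>kq\<in>F. ennreal (diameter (ball (snd kq) (r (fst kq))) powr (2*\<tau>)))"
      unfolding F_def using injJ by (subst sum.reindex) (auto simp: Cv_def J_def intro!: sum.cong)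
    also have "\<dots> \<le> (\<Sum>kq\<in>F. ennreal (2 powr (2*\<tau>) * r (fst kq) powr \<tau>) * Eg \<mu> u p s (snd kq) (2 * r (fst kq)))"
    proof (intro sum_mono)
      fix kq assume "kq \<in> F"
      then obtain k q where kq: "kq = (k,q)" "(k,q) \<in> P" using FP by (metis subsetD surj_pair)
      have E: "ennreal (r k powr \<tau>) < Eg \<mu> u p s q (2 * r k)" using kq unfolding P_def by auto
      have "diameter (ball q (r k)) powr (2*\<tau>) \<le> (2 * r k) powr (2*\<tau>)"
        by (rule powr_mono2) (use \<tau> rpos diameter_ge_0 diam_ball_le[of "r k" q] in \<open>auto simp: less_imp_le\<close>)
      also have "\<dots> = 2 powr (2*\<tau>) * r k powr \<tau> * r k powr \<tau>"
        using rpos[of k] by (simp add: powr_mult powr_add[symmetric])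
      finally have "ennreal (diameter (ball q (r k)) powr (2*\<tau>)) \<le> ennreal (2 powr (2*\<tau>) * r k powr \<tau>) * ennreal (r k powr \<tau>)"
        by (simp add: ennreal_mult[symmetric])
      also have "\<dots> \<le> ennreal (2 powr (2*\<tau>) * r k powr \<tau>) * Eg \<mu> u p s q (2 * r k)"
        using E by (intro mult_left_mono) auto
      finally show "ennreal (diameter (ball (snd kq) (r (fst kq))) powr (2*\<tau>)) \<le> ennreal (2 powr (2*\<tau>) * r (fst kq) powr \<tau>) * Eg \<mu> u p s (snd kq) (2 * r (fst kq))"
        using kq by simp
    qed
    also have "\<dots> = (\<Sum>k\<in>fst ` F. \<Sum>q\<in>{q. (k,q) \<in> F}. ennreal (2 powr (2*\<tau>) * r k powr \<tau>) * Eg \<mu> u p s q (2 * r k))"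
    proof -
      have "F = (SIGMA k:fst ` F. {q. (k,q) \<in> F})" by force
      then show ?thesis
        using finF finQ' by (subst sum.Sigma) (auto simp: split_beta)
    qed
    also have "\<dots> \<le> (\<Sum>k\<in>fst ` F. ennreal (2 powr (2*\<tau>) * r k powr \<tau>) * (?M * ?I))"
    proof (intro sum_mono)
      fix k assume "k \<in> fst ` F"
      have finQ: "finite {q. (k,q) \<in> F}" by (rule finQ')
      have "(\<Sum>q\<in>{q. (k,q) \<in> F}. ennreal (2 powr (2*\<tau>) * r k powr \<tau>) * Eg \<mu> u p s q (2 * r k))
          = ennreal (2 powr (2*\<tau>) * r k powr \<tau>) * (\<Sum>q\<in>{q. (k,q) \<in> F}. Eg \<mu> u p s q (2 * r k))"
        by (rule sum_distrib_left[symmetric])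
      also have "\<dots> \<le> ennreal (2 powr (2*\<tau>) * r k powr \<tau>) * (?M * ?I)"
      proof (intro mult_left_mono overlap)
        show "finite {q. (k,q) \<in> F}" by (fact finQ)
        show "\<And>p q. p \<in> {q. (k,q) \<in> F} \<Longrightarrow> q \<in> {q. (k,q) \<in> F} \<Longrightarrow> p \<noteq> q \<Longrightarrow> r k \<le> dist p q"
          using FP Nsep unfolding P_def by blast
      qed (use rpos rle in auto)
      finally show "(\<Sum>q\<in>{q. (k,q) \<in> F}. ennreal (2 powr (2*\<tau>) * r k powr \<tau>) * Eg \<mu> u p s q (2 * r k))
          \<le> ennreal (2 powr (2*\<tau>) * r k powr \<tau>) * (?M * ?I)" .
    qed
    also have "\<dots> = ennreal (\<Sum>k\<in>fst ` F. 2 powr (2*\<tau>) * r k powr \<tau>) * (?M * ?I)"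
      by (simp add: sum_distrib_right[symmetric])
    also have "\<dots> \<le> ennreal B * (?M * ?I)"
    proof (intro mult_right_mono ennreal_leI)
      have sub: "fst ` F \<subseteq> {K..}" using FP unfolding P_def by auto
      have "(\<Sum>k\<in>fst ` F. 2 powr (2*\<tau>) * r k powr \<tau>) = 2 powr (2*\<tau>) * R0 powr \<tau> * (\<Sum>k\<in>fst ` F. \<theta>^k)"
        by (simp add: rpow sum_distrib_left mult.assoc)
      also have "\<dots> \<le> 2 powr (2*\<tau>) * R0 powr \<tau> * (\<theta>^K / (1 - \<theta>))"
        by (intro mult_left_mono geom_sum_le) (use finF sub \<theta> in auto)
      finally show "(\<Sum>k\<in>fst ` F. 2 powr (2*\<tau>) * r k powr \<tau>) \<le> B" unfolding B_def by simp
    qed simp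
    finally show ?thesis .
  qed
  have "(\<Sum>i. ennreal (diameter (Cv i) powr (2*\<tau>))) \<le> ennreal B * (?M * ?I)"
    by (rule suminf_le_const) (rule summableI, rule part)
  with hp show ?thesis unfolding B_def \<theta>_def by simp
qed

end

context AR begin

lemma cover_zero:
  fixes u :: "'a \<Rightarrow> real" and \<tau> :: real and A :: "'a set"
  assumes I: "(\<integral>\<^sup>+ y. \<integral>\<^sup>+ z. ennreal (gfun \<mu> u p s y z) \<partial>\<mu> \<partial>\<mu>) < \<infinity>" and \<tau>: "0 < \<tau>"
  and A: "A \<subseteq> {x. \<forall>K. \<exists>k\<ge>K. Eg \<mu> u p s x (R0 / 2^k) > ennreal ((R0 / 2^k) powr \<tau>)}"
  shows "hausdorff_measure (2*\<tau>) A = 0"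
proof -
  let ?I = "\<integral>\<^sup>+ y. \<integral>\<^sup>+ z. ennreal (gfun \<mu> u p s y z) \<partial>\<mu> \<partial>\<mu>"
  obtain I' where I': "?I = ennreal I'" "0 \<le> I'" using I by (cases ?I) auto
  define \<theta> where "\<theta> = (1/2::real) powr \<tau>"
  have \<theta>: "0 \<le> \<theta>" "\<theta> < 1" unfolding \<theta>_def
    using \<tau> powr_less_mono2[of \<tau> "1/2" 1] by auto
  define c where "c = 2 powr (2*\<tau>) * R0 powr \<tau> / (1 - \<theta>) * (C^2 * 5 powr n * I')"
  have c0: "0 \<le> c" unfolding c_def using \<theta> I' C1 R0 by simp
  have pre0: "hausdorff_pre (2*\<tau>) \<delta> A = 0" if \<delta>: "0 < \<delta>" for \<delta>
  proof -
    have key: "hausdorff_pre (2*\<tau>) \<delta> A \<le> ennreal (c * \<theta>^K)" if K: "2 * (R0 / 2^K) \<le> \<delta>" for K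
    proof -
      have "hausdorff_pre (2*\<tau>) \<delta> A \<le> ennreal (2 powr (2*\<tau>) * R0 powr \<tau> * \<theta>^K / (1 - \<theta>))
            * (ennreal (C^2 * 5 powr n) * ?I)"
        unfolding \<theta>_def
        by (rule cover_key[of \<tau> K \<delta> A u p s]) (use \<tau> K A in auto)
      also have "\<dots> = ennreal (c * \<theta>^K)"
        unfolding I'(1) c_def using \<theta> C1 R0 I'(2)
        by (simp add: ennreal_mult[symmetric] mult_ac)
      finally show ?thesis .
    qed
    have ev1: "eventually (\<lambda>K. c * \<theta>^K < e) sequentially" if "0 < e" for e
    proof -
      have "(\<lambda>K. c * \<theta>^K) \<longlonglongrightarrow> c * 0"
        by (intro tendsto_mult_left LIMSEQ_power_zero) (use \<theta> in simp)
      then show ?thesis using that by (auto dest: order_tendstoD(2))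
    qed
    have ev2: "eventually (\<lambda>K. 2 * (R0 / 2^K) \<le> \<delta>) sequentially"
    proof -
      have "(\<lambda>K::nat. 2 * R0 * (1/2)^K) \<longlonglongrightarrow> 2 * R0 * 0"
        by (intro tendsto_mult_left LIMSEQ_power_zero) simp
      then have "eventually (\<lambda>K::nat. 2 * R0 * (1/2)^K < \<delta>) sequentially"
        using \<delta> by (auto dest: order_tendstoD(2))
      then show ?thesis by eventually_elim (simp add: field_simps)
    qed
    have "hausdorff_pre (2*\<tau>) \<delta> A \<le> 0"
    proof (rule ennreal_le_epsilon)
      fix e :: real assume "0 < e"
      from eventually_conj[OF ev1[OF this] ev2] obtain K where
        "c * \<theta>^K < e" "2 * (R0 / 2^K) \<le> \<delta>" by (auto simp: eventually_sequentially)
      then have "hausdorff_pre (2*\<tau>) \<delta> A \<le> ennreal e"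
        using key[of K] by (meson ennreal_leI less_imp_le order_trans)
      then show "hausdorff_pre (2*\<tau>) \<delta> A \<le> 0 + ennreal e" by simp
    qed
    then show ?thesis by simp
  qed
  have "(SUP \<delta>\<in>{0<..}. hausdorff_pre (2*\<tau>) \<delta> A) = (SUP \<delta>\<in>({0<..}::real set). (0::ennreal))"
    using pre0 by (intro SUP_cong) auto
  then show ?thesis unfolding hausdorff_measure_def by simp
qed

end

locale ARu = AR +
  fixes u :: "'a::metric_space \<Rightarrow> real" and p s :: real
  assumes u_meas[measurable]: "u \<in> borel_measurable \<mu>"
  and p1: "1 < p" and sp: "s * p = n"
  and Lp: "\<And>x r. r > 0 \<Longrightarrow> (\<integral>\<^sup>+ y. ennreal (\<bar>u y\<bar> powr p) * indicator (ball x r) y \<partial>\<mu>) < \<infinity>"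
begin

lemma u_int:
  assumes "0 < r"
  shows "integrable \<mu> (\<lambda>y. indicator (ball x r) y * u y)"
proof (rule integrableI_bounded)
  show "(\<lambda>y. indicator (ball x r) y * u y) \<in> borel_measurable \<mu>" by measurable
  have pw: "ennreal (norm (indicator (ball x r) y * u y)) \<le> indicator (ball x r) y + ennreal (\<bar>u y\<bar> powr p) * indicator (ball x r) y" for y
  proof (cases "y \<in> ball x r")
    case True
    have "\<bar>u y\<bar> \<le> 1 + \<bar>u y\<bar> powr p"
    proof (cases "\<bar>u y\<bar> \<le> 1")
      case True then show ?thesis using powr_ge_zero[of "\<bar>u y\<bar>" p] by linarith
    next
      case False
      then have "\<bar>u y\<bar> powr 1 \<le> \<bar>u y\<bar> powr p" using p1 by (intro powr_mono) auto
      then show ?thesis using False by simp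
    qed
    then have "ennreal \<bar>u y\<bar> \<le> ennreal (1 + \<bar>u y\<bar> powr p)" by (rule ennreal_leI)
    also have "\<dots> = 1 + ennreal (\<bar>u y\<bar> powr p)" by (simp add: ennreal_plus)
    finally show ?thesis using True by simp
  next
    case False then show ?thesis by simp
  qed
  have "(\<integral>\<^sup>+ y. ennreal (norm (indicator (ball x r) y * u y)) \<partial>\<mu>)
      \<le> (\<integral>\<^sup>+ y. indicator (ball x r) y + ennreal (\<bar>u y\<bar> powr p) * indicator (ball x r) y \<partial>\<mu>)"
    by (intro nn_integral_mono pw)
  also have "\<dots> = emeasure \<mu> (ball x r) + (\<integral>\<^sup>+ y. ennreal (\<bar>u y\<bar> powr p) * indicator (ball x r) y \<partial>\<mu>)"
    by (subst nn_integral_add) auto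
  also have "\<dots> < \<infinity>" using fin[OF assms] Lp[OF assms] by simp
  finally show "(\<integral>\<^sup>+ y. ennreal (norm (indicator (ball x r) y * u y)) \<partial>\<mu>) < \<infinity>" .
qed

end

context ARu begin

lemma mpos: "0 < r \<Longrightarrow> r \<le> 4*R0 \<Longrightarrow> 0 < measure \<mu> (ball x r)"
  using lower[of r x] C1 by (smt (verit) divide_pos_pos powr_gt_zero)

lemma avg_dev:
  assumes r: "0 < r" "r \<le> 4*R0"
  shows "ennreal (\<bar>c - ball_avg \<mu> u x r\<bar> * measure \<mu> (ball x r)) \<le> (\<integral>\<^sup>+ z. ennreal \<bar>c - u z\<bar> * indicator (ball x r) z \<partial>\<mu>)"
proof -
  let ?m = "measure \<mu> (ball x r)"
  let ?S = "\<integral> z. indicator (ball x r) z * u z \<partial>\<mu>"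
  have m: "0 < ?m" using mpos[OF r] .
  have avg: "ball_avg \<mu> u x r = ?S / ?m"
    unfolding ball_avg_def set_lebesgue_integral_def by simp
  have int: "integrable \<mu> (\<lambda>z. indicator (ball x r) z * u z)" by (rule u_int[OF r(1)])
  have ind: "integrable \<mu> (\<lambda>z. c * indicator (ball x r) z :: real)"
    using fin[OF r(1)] by (intro integrable_mult_right) auto
  have "(\<integral> z. indicator (ball x r) z * (c - u z) \<partial>\<mu>) = (\<integral> z. c * indicator (ball x r) z - indicator (ball x r) z * u z \<partial>\<mu>)"
    by (intro Bochner_Integration.integral_cong) (auto simp: algebra_simps)
  also have "\<dots> = c * ?m - ?S"
    using int ind by simp
  also have "\<dots> = (c - ball_avg \<mu> u x r) * ?m" using m unfolding avg by (simp add: field_simps)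
  finally have eq: "(\<integral> z. indicator (ball x r) z * (c - u z) \<partial>\<mu>) = (c - ball_avg \<mu> u x r) * ?m" .
  have int2: "integrable \<mu> (\<lambda>z. indicator (ball x r) z * (c - u z))"
  proof -
    have "integrable \<mu> (\<lambda>z. c * indicator (ball x r) z - indicator (ball x r) z * u z)" using int ind by auto
    moreover have "(\<lambda>z. c * indicator (ball x r) z - indicator (ball x r) z * u z) = (\<lambda>z. indicator (ball x r) z * (c - u z))"
      by (auto simp: algebra_simps)
    ultimately show ?thesis by simp
  qed
  have "ennreal (\<bar>c - ball_avg \<mu> u x r\<bar> * ?m) = ennreal (norm (\<integral> z. indicator (ball x r) z * (c - u z) \<partial>\<mu>))"
    using m unfolding eq by (simp add: abs_mult)
  also have "\<dots> \<le> (\<integral>\<^sup>+ z. norm (indicator (ball x r) z * (c - u z)) \<partial>\<mu>)"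
    by (rule integral_norm_bound_ennreal[OF int2])
  also have "\<dots> = (\<integral>\<^sup>+ z. ennreal \<bar>c - u z\<bar> * indicator (ball x r) z \<partial>\<mu>)"
    by (intro nn_integral_cong) (auto simp: indicator_def)
  finally show ?thesis .
qed

lemma avg_diff:
  assumes "0 < \<rho>" "\<rho> \<le> R" "R \<le> 4*R0"
  shows "ennreal (\<bar>ball_avg \<mu> u x \<rho> - ball_avg \<mu> u x R\<bar> * measure \<mu> (ball x \<rho>) * measure \<mu> (ball x R))
    \<le> (\<integral>\<^sup>+ y. \<integral>\<^sup>+ z. ennreal \<bar>u y - u z\<bar> * indicator (ball x R) y * indicator (ball x R) z \<partial>\<mu> \<partial>\<mu>)"
proof -
  let ?a = "ball_avg \<mu> u x R"
  let ?mR = "measure \<mu> (ball x R)"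
  have R: "0 < R" "R \<le> 4*R0" using assms by auto
  have r: "0 < \<rho>" "\<rho> \<le> 4*R0" using assms by auto
  have mR: "0 < ?mR" using mpos[OF R] .
  have "ennreal (\<bar>ball_avg \<mu> u x \<rho> - ?a\<bar> * measure \<mu> (ball x \<rho>) * ?mR)
      = ennreal (\<bar>?a - ball_avg \<mu> u x \<rho>\<bar> * measure \<mu> (ball x \<rho>)) * ennreal ?mR"
    using mR by (simp add: ennreal_mult[symmetric] abs_minus_commute)
  also have "\<dots> \<le> (\<integral>\<^sup>+ z. ennreal \<bar>?a - u z\<bar> * indicator (ball x \<rho>) z \<partial>\<mu>) * ennreal ?mR"
    by (intro mult_right_mono avg_dev[OF r]) simp
  also have "\<dots> \<le> (\<integral>\<^sup>+ z. ennreal \<bar>?a - u z\<bar> * indicator (ball x R) z \<partial>\<mu>) * ennreal ?mR"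
    using assms by (intro mult_right_mono nn_integral_mono) (auto simp: indicator_def)
  also have "\<dots> = (\<integral>\<^sup>+ z. ennreal (\<bar>u z - ?a\<bar> * ?mR) * indicator (ball x R) z \<partial>\<mu>)"
    using mR by (subst nn_integral_multc[symmetric]) (auto intro!: nn_integral_cong simp: ennreal_mult abs_minus_commute mult_ac)
  also have "\<dots> \<le> (\<integral>\<^sup>+ z. (\<integral>\<^sup>+ w. ennreal \<bar>u z - u w\<bar> * indicator (ball x R) w \<partial>\<mu>) * indicator (ball x R) z \<partial>\<mu>)"
    by (intro nn_integral_mono mult_right_mono avg_dev[OF R]) simp
  also have "\<dots> = (\<integral>\<^sup>+ y. \<integral>\<^sup>+ z. ennreal \<bar>u y - u z\<bar> * indicator (ball x R) y * indicator (ball x R) z \<partial>\<mu> \<partial>\<mu>)"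
    by (intro nn_integral_cong, subst nn_integral_multc[symmetric]) (auto intro!: nn_integral_cong simp: mult_ac)
  finally show ?thesis .
qed

end

lemma key_real:
  fixes a lam p D K g :: real
  assumes "0 < lam" "lam < a" "1 < p" "0 < D" "D \<le> K" "g = a powr p / D"
  shows "a \<le> K / lam powr (p - 1) * g"
proof -
  have a0: "0 < a" using assms by simp
  have "a powr p = a * a powr (p - 1)"
    using a0 by (simp add: powr_mult_base)
  moreover have "lam powr (p - 1) \<le> a powr (p - 1)"
    using assms by (intro powr_mono2) auto
  ultimately have "a * lam powr (p - 1) \<le> a powr p" using a0 by simp
  then have "a \<le> a powr p / lam powr (p - 1)" using assms by (simp add: field_simps)
  also have "a powr p = g * D" using assms by simp
  also have "g * D / lam powr (p - 1) \<le> g * K / lam powr (p - 1)"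
  proof -
    have "0 \<le> g" using assms by simp
    then show ?thesis using assms by (intro divide_right_mono mult_left_mono) auto
  qed
  finally show ?thesis by (simp add: mult.commute)
qed

lemma gfun_nonneg: "0 \<le> gfun \<mu> u p s y z"
  unfolding gfun_def V_def by (intro divide_nonneg_nonneg mult_nonneg_nonneg) auto

context ARu begin

lemma split_bound:
  assumes R: "0 < R" "R \<le> R0" and lam: "0 < lam"
  shows "(\<integral>\<^sup>+ y. \<integral>\<^sup>+ z. ennreal \<bar>u y - u z\<bar> * indicator (ball x R) y * indicator (ball x R) z \<partial>\<mu> \<partial>\<mu>)
    \<le> ennreal (lam * measure \<mu> (ball x R) * measure \<mu> (ball x R))
      + ennreal (C * (2*R) powr (2*n) / lam powr (p - 1)) * Eg \<mu> u p s x R"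
proof -
  let ?B = "ball x R"
  let ?a = "\<lambda>y z. \<bar>u y - u z\<bar>"
  let ?\<kappa> = "C * (2*R) powr (2*n) / lam powr (p - 1)"
  define f1 where "f1 y z = ennreal (if ?a y z \<le> lam then ?a y z else 0) * indicator ?B y * indicator ?B z" for y z
  define f2 where "f2 y z = ennreal (if ?a y z \<le> lam then 0 else ?a y z) * indicator ?B y * indicator ?B z" for y z
  have f1m[measurable]: "(\<lambda>(y,z). f1 y z) \<in> borel_measurable (\<mu> \<Otimes>\<^sub>M \<mu>)" unfolding f1_def by measurable
  have f2m[measurable]: "(\<lambda>(y,z). f2 y z) \<in> borel_measurable (\<mu> \<Otimes>\<^sub>M \<mu>)" unfolding f2_def by measurable
  have f1y[measurable]: "f1 y \<in> borel_measurable \<mu>" for y unfolding f1_def by measurable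
  have f2y[measurable]: "f2 y \<in> borel_measurable \<mu>" for y unfolding f2_def by measurable
  have sf: "sigma_finite_measure \<mu>" by (rule sigma_fin)
  have I1m: "(\<lambda>y. \<integral>\<^sup>+ z. f1 y z \<partial>\<mu>) \<in> borel_measurable \<mu>"
    by (rule sigma_finite_measure.borel_measurable_nn_integral[OF sf]) simp
  have I2m: "(\<lambda>y. \<integral>\<^sup>+ z. f2 y z \<partial>\<mu>) \<in> borel_measurable \<mu>"
    by (rule sigma_finite_measure.borel_measurable_nn_integral[OF sf]) simp
  have "(\<integral>\<^sup>+ y. \<integral>\<^sup>+ z. ennreal (?a y z) * indicator ?B y * indicator ?B z \<partial>\<mu> \<partial>\<mu>)
      = (\<integral>\<^sup>+ y. \<integral>\<^sup>+ z. f1 y z + f2 y z \<partial>\<mu> \<partial>\<mu>)"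
    unfolding f1_def f2_def by (intro nn_integral_cong) (auto simp: indicator_def)
  also have "\<dots> = (\<integral>\<^sup>+ y. (\<integral>\<^sup>+ z. f1 y z \<partial>\<mu>) + (\<integral>\<^sup>+ z. f2 y z \<partial>\<mu>) \<partial>\<mu>)"
    by (intro nn_integral_cong nn_integral_add) simp_all
  also have "\<dots> = (\<integral>\<^sup>+ y. \<integral>\<^sup>+ z. f1 y z \<partial>\<mu> \<partial>\<mu>) + (\<integral>\<^sup>+ y. \<integral>\<^sup>+ z. f2 y z \<partial>\<mu> \<partial>\<mu>)"
    by (rule nn_integral_add[OF I1m I2m])
  also have "\<dots> \<le> ennreal (lam * measure \<mu> ?B * measure \<mu> ?B) + ennreal ?\<kappa> * Eg \<mu> u p s x R"
  proof (rule add_mono)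
    have "(\<integral>\<^sup>+ y. \<integral>\<^sup>+ z. f1 y z \<partial>\<mu> \<partial>\<mu>) \<le> (\<integral>\<^sup>+ y. \<integral>\<^sup>+ z. (ennreal lam * indicator ?B y) * indicator ?B z \<partial>\<mu> \<partial>\<mu>)"
      unfolding f1_def by (intro nn_integral_mono) (auto simp: indicator_def)
    also have "\<dots> = (\<integral>\<^sup>+ y. (ennreal lam * emeasure \<mu> ?B) * indicator ?B y \<partial>\<mu>)"
      by (intro nn_integral_cong) (subst nn_integral_cmult_indicator, simp, simp add: mult_ac)
    also have "\<dots> = ennreal lam * emeasure \<mu> ?B * emeasure \<mu> ?B"
      by (simp add: nn_integral_cmult_indicator)
    also have "\<dots> = ennreal (lam * measure \<mu> ?B * measure \<mu> ?B)"
      using fin[OF R(1)] lam by (simp add: emeasure_eq_ennreal_measure less_top ennreal_mult)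
    finally show "(\<integral>\<^sup>+ y. \<integral>\<^sup>+ z. f1 y z \<partial>\<mu> \<partial>\<mu>) \<le> ennreal (lam * measure \<mu> ?B * measure \<mu> ?B)" .
  next
    have pw: "f2 y z \<le> ennreal ?\<kappa> * (ennreal (gfun \<mu> u p s y z) * indicator ?B y * indicator ?B z)" for y z
    proof (cases "y \<in> ?B \<and> z \<in> ?B \<and> \<not> ?a y z \<le> lam")
      case False then show ?thesis unfolding f2_def by (auto simp: indicator_def)
    next
      case True
      then have yz: "y \<in> ?B" "z \<in> ?B" "lam < ?a y z" by auto
      have "y \<noteq> z" using yz lam by auto
      define d where "d = dist y z"
      have d: "0 < d" "d < 2*R" using \<open>y \<noteq> z\<close> yz dist_triangle3[of y z x] unfolding d_def by auto
      have V: "0 < V \<mu> y z" "V \<mu> y z \<le> C * d powr n"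
        unfolding V_def d_def[symmetric] using mpos[of d y] upper[of d y] d R R0 by auto
      have "d powr (s*p) * V \<mu> y z \<le> d powr n * (C * d powr n)"
        unfolding sp using V d by (intro mult_left_mono) auto
      also have "\<dots> = C * (d powr n * d powr n)" by simp
      also have "\<dots> \<le> C * ((2*R) powr n * (2*R) powr n)"
        using C1 d npos by (intro mult_left_mono mult_mono powr_mono2) auto
      also have "\<dots> = C * (2*R) powr (2*n)" by (simp add: powr_add[symmetric])
      finally have DK: "d powr (s*p) * V \<mu> y z \<le> C * (2*R) powr (2*n)" .
      have "?a y z \<le> ?\<kappa> * gfun \<mu> u p s y z"
        by (rule key_real[OF lam yz(3) p1 _ DK]) (use V d in \<open>auto simp: gfun_def d_def\<close>)
      then have "ennreal (?a y z) \<le> ennreal (?\<kappa> * gfun \<mu> u p s y z)" by (rule ennreal_leI)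
      also have "\<dots> = ennreal ?\<kappa> * ennreal (gfun \<mu> u p s y z)"
        using C1 lam gfun_nonneg by (intro ennreal_mult) auto
      finally show ?thesis using yz unfolding f2_def by simp
    qed
    have "(\<integral>\<^sup>+ y. \<integral>\<^sup>+ z. f2 y z \<partial>\<mu> \<partial>\<mu>) \<le> (\<integral>\<^sup>+ y. \<integral>\<^sup>+ z. ennreal ?\<kappa> * (ennreal (gfun \<mu> u p s y z) * indicator ?B y * indicator ?B z) \<partial>\<mu> \<partial>\<mu>)"
      by (intro nn_integral_mono pw)
    also have "\<dots> \<le> (\<integral>\<^sup>+ y. ennreal ?\<kappa> * (\<integral>\<^sup>+ z. ennreal (gfun \<mu> u p s y z) * indicator ?B y * indicator ?B z \<partial>\<mu>) \<partial>\<mu>)"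
      by (intro nn_integral_mono nn_cmult_le) simp
    also have "\<dots> \<le> ennreal ?\<kappa> * Eg \<mu> u p s x R"
      unfolding Eg_def by (intro nn_cmult_le) simp
    finally show "(\<integral>\<^sup>+ y. \<integral>\<^sup>+ z. f2 y z \<partial>\<mu> \<partial>\<mu>) \<le> ennreal ?\<kappa> * Eg \<mu> u p s x R" .
  qed
  finally show ?thesis .
qed

end

context ARu begin

lemma scale_est:
  assumes R: "0 < R" "R \<le> R0" and rho: "R/2 \<le> \<rho>" "\<rho> \<le> R" and \<tau>: "0 < \<tau>"
    and E: "Eg \<mu> u p s x R \<le> ennreal (R powr \<tau>)"
  shows "\<bar>ball_avg \<mu> u x \<rho> - ball_avg \<mu> u x R\<bar> \<le> (C^2 * 2 powr n + C^3 * 2 powr (3*n)) * R powr (\<tau>/p)"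
proof -
  define X where "X = \<bar>ball_avg \<mu> u x \<rho> - ball_avg \<mu> u x R\<bar>"
  define lam where "lam = R powr (\<tau>/p)"
  define \<kappa> where "\<kappa> = C * (2*R) powr (2*n) / lam powr (p - 1)"
  define m\<rho> where "m\<rho> = measure \<mu> (ball x \<rho>)"
  define mR where "mR = measure \<mu> (ball x R)"
  define P where "P = R powr n"
  define L where "L = P / 2 powr n / C"
  have P: "0 < P" unfolding P_def using R by simp
  have Cp: "0 < C" using C1 by simp
  have lam: "0 < lam" unfolding lam_def using R by simp
  have \<rho>0: "0 < \<rho>" using R rho by simp
  have L0: "0 < L" unfolding L_def using P Cp by simp
  have Lle: "L \<le> m\<rho>"
  proof -
    have "L = (R/2) powr n / C" unfolding L_def P_def using R by (simp add: powr_divide)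
    also have "\<dots> \<le> \<rho> powr n / C" using rho R npos Cp by (intro divide_right_mono powr_mono2) auto
    also have "\<dots> \<le> m\<rho>" unfolding m\<rho>_def using \<rho>0 rho R by (intro lower) auto
    finally show ?thesis .
  qed
  have M1: "P / C \<le> mR" unfolding mR_def P_def using R by (intro lower) auto
  have U: "mR \<le> C * P" unfolding mR_def P_def using R by (intro upper) auto
  have mR0: "0 < mR" using M1 P Cp by (smt (verit) divide_pos_pos)
  have \<kappa>0: "0 \<le> \<kappa>" unfolding \<kappa>_def using Cp by simp
  have X0: "0 \<le> X" unfolding X_def by simp
  have "ennreal (X * m\<rho> * mR) \<le> ennreal (lam * mR * mR) + ennreal \<kappa> * Eg \<mu> u p s x R"
    unfolding X_def m\<rho>_def mR_def \<kappa>_def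
    using avg_diff[OF \<rho>0 rho(2), of x] split_bound[OF R lam, of x] R R0 by (auto intro: order_trans)
  also have "\<dots> \<le> ennreal (lam * mR * mR) + ennreal \<kappa> * ennreal (R powr \<tau>)"
    by (intro add_mono mult_left_mono E) auto
  also have "\<dots> = ennreal (lam * mR * mR + \<kappa> * R powr \<tau>)"
    using lam mR0 \<kappa>0 by (simp add: ennreal_mult ennreal_plus)
  finally have "X * m\<rho> * mR \<le> lam * mR * mR + \<kappa> * R powr \<tau>"
    using lam mR0 \<kappa>0 by (subst (asm) ennreal_le_iff) auto
  then have "X * (L * mR) \<le> lam * mR * mR + \<kappa> * R powr \<tau>"
    using Lle X0 mR0 by (smt (verit) mult.assoc mult_right_mono mult_left_mono)
  then have "X \<le> (lam * mR * mR + \<kappa> * R powr \<tau>) / (L * mR)"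
    using L0 mR0 by (simp add: pos_le_divide_eq)
  also have "\<dots> = lam * (mR / L) + \<kappa> * R powr \<tau> / (L * mR)"
    using L0 mR0 by (simp add: field_simps)
  also have "\<dots> \<le> lam * (C * P / L) + \<kappa> * R powr \<tau> / (L * (P / C))"
  proof (intro add_mono mult_left_mono divide_right_mono divide_left_mono)
  qed (use U M1 L0 P Cp lam \<kappa>0 mR0 in auto)
  also have "lam * (C * P / L) = C^2 * 2 powr n * R powr (\<tau>/p)"
    unfolding L_def lam_def using P Cp by (simp add: field_simps power2_eq_square)
  also have "\<kappa> * R powr \<tau> / (L * (P / C)) = C^3 * 2 powr (3*n) * R powr (\<tau>/p)"
  proof -
    have e1: "(2*R) powr (2*n) = 2 powr (2*n) * P * P"
      unfolding P_def using R by (simp add: powr_mult powr_add[symmetric])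
    have e2: "R powr \<tau> = R powr (\<tau>/p) * lam powr (p - 1)"
      unfolding lam_def using R p1 by (simp add: powr_powr powr_add[symmetric] field_simps)
    have e3: "2 powr (3*n) = 2 powr (2*n) * 2 powr n" by (simp add: powr_add[symmetric])
    have lp: "0 < lam powr (p - 1)" using lam by simp
    show ?thesis unfolding \<kappa>_def L_def e1 e2 e3 using P Cp lp
      by (simp add: field_simps power2_eq_square power3_eq_cube)
  qed
  finally show ?thesis unfolding X_def by (simp add: algebra_simps)
qed

end

context ARu begin

lemma limit_exists:
  assumes \<tau>: "0 < \<tau>"
    and K0: "\<And>k. k \<ge> K0 \<Longrightarrow> Eg \<mu> u p s x (R0/2^k) \<le> ennreal ((R0/2^k) powr \<tau>)"
  shows "\<exists>L. ((\<lambda>r. ball_avg \<mu> u x r) \<longlongrightarrow> L) (at_right 0)"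
proof -
  define r where "r k = R0 / 2^k" for k :: nat
  define \<eta> where "\<eta> = \<tau> / p"
  define \<theta> where "\<theta> = (1/2::real) powr \<eta>"
  define D where "D = (C^2 * 2 powr n + C^3 * 2 powr (3*n)) * R0 powr \<eta>"
  define a where "a \<rho> = ball_avg \<mu> u x \<rho>" for \<rho>
  define b where "b k = a (r k)" for k
  have \<eta>: "0 < \<eta>" unfolding \<eta>_def using \<tau> p1 by simp
  have \<theta>: "0 \<le> \<theta>" "\<theta> < 1" unfolding \<theta>_def
    using \<eta> powr_less_mono2[of \<eta> "1/2" 1] by auto
  have D0: "0 \<le> D" unfolding D_def using C1 by simp
  have rpos: "0 < r k" for k unfolding r_def using R0 by simp
  have rle: "r k \<le> R0" for k unfolding r_def using R0 by (simp add: divide_le_eq one_le_power[of 2 k] mult_le_cancel_left1)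
  have rSuc: "r (Suc k) = r k / 2" for k unfolding r_def by simp
  have rmono: "i \<le> j \<Longrightarrow> r j \<le> r i" for i j unfolding r_def using R0
    by (intro divide_left_mono) (auto intro: power_increasing)
  have rpow: "r k powr \<eta> = R0 powr \<eta> * \<theta>^k" for k
  proof -
    have "r k = R0 * (1/2)^k" unfolding r_def by (simp add: field_simps)
    then show ?thesis using R0 unfolding \<theta>_def by (simp add: powr_mult pow_powr)
  qed
  have est: "\<bar>a \<rho> - b k\<bar> \<le> D * \<theta>^k" if k: "k \<ge> K0" and rho: "r k / 2 \<le> \<rho>" "\<rho> \<le> r k" for k \<rho>
  proof -
    have "\<bar>a \<rho> - b k\<bar> \<le> (C^2 * 2 powr n + C^3 * 2 powr (3*n)) * r k powr (\<tau>/p)"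
      unfolding a_def b_def
      by (rule scale_est[OF rpos rle rho \<tau>]) (use K0[OF k] in \<open>simp add: r_def\<close>)
    also have "\<dots> = D * \<theta>^k" unfolding D_def \<eta>_def[symmetric] rpow by simp
    finally show ?thesis .
  qed
  have stepb: "\<bar>b (Suc k) - b k\<bar> \<le> D * \<theta>^k" if "k \<ge> K0" for k
    using est[OF that, of "r (Suc k)"] rpos[of k] unfolding b_def rSuc by simp
  have chain: "\<bar>b m - b k\<bar> \<le> D * (\<Sum>j\<in>{k..<m}. \<theta>^j)" if "K0 \<le> k" "k \<le> m" for k m
    using that(2)
  proof (induction m rule: dec_induct)
    case base then show ?case by simp
  next
    case (step m)
    have "\<bar>b (Suc m) - b k\<bar> \<le> \<bar>b (Suc m) - b m\<bar> + \<bar>b m - b k\<bar>" by simp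
    also have "\<dots> \<le> D * \<theta>^m + D * (\<Sum>j\<in>{k..<m}. \<theta>^j)"
      using step.IH stepb[of m] that(1) step.hyps(1) by (intro add_mono) auto
    also have "\<dots> = D * (\<Sum>j\<in>{k..<Suc m}. \<theta>^j)" using step.hyps(1) by (simp add: algebra_simps)
    finally show ?case .
  qed
  have chain2: "\<bar>b m - b k\<bar> \<le> D * \<theta>^k / (1 - \<theta>)" if "K0 \<le> k" "k \<le> m" for k m
  proof -
    have "(\<Sum>j\<in>{k..<m}. \<theta>^j) \<le> \<theta>^k / (1 - \<theta>)" by (rule geom_sum_le) (use \<theta> in auto)
    then show ?thesis using chain[OF that] D0 by (smt (verit) mult_left_mono times_divide_eq_right)
  qed
  have ev: "\<exists>M\<ge>K0. D * \<theta>^M * (2 + 2 / (1 - \<theta>)) < e" if "0 < e" for e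
  proof -
    have "(\<lambda>M. D * (2 + 2 / (1 - \<theta>)) * \<theta>^M) \<longlonglongrightarrow> D * (2 + 2 / (1 - \<theta>)) * 0"
      by (intro tendsto_mult_left LIMSEQ_power_zero) (use \<theta> in simp)
    then have "eventually (\<lambda>M. D * (2 + 2 / (1 - \<theta>)) * \<theta>^M < e) sequentially"
      using that by (auto dest: order_tendstoD(2))
    then obtain M where "\<forall>m\<ge>M. D * (2 + 2 / (1 - \<theta>)) * \<theta>^m < e" by (auto simp: eventually_sequentially)
    then show ?thesis by (intro exI[of _ "max M K0"]) (auto simp: mult_ac)
  qed
  have "Cauchy b"
  proof (rule CauchyI)
    fix e :: real assume "0 < e"
    from ev[OF this] obtain M where M: "M \<ge> K0" "D * \<theta>^M * (2 + 2 / (1 - \<theta>)) < e" by blast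
    have "norm (b m - b n) < e" if "m \<ge> M" "n \<ge> M" for m n
    proof -
      have "norm (b m - b n) \<le> \<bar>b m - b M\<bar> + \<bar>b n - b M\<bar>" by simp
      also have "\<dots> \<le> D * \<theta>^M / (1 - \<theta>) + D * \<theta>^M / (1 - \<theta>)"
        using chain2 M that by (intro add_mono) auto
      also have "\<dots> \<le> D * \<theta>^M * (2 + 2 / (1 - \<theta>))"
      proof -
        define c where "c = D * \<theta>^M"
        define y where "y = 1 / (1 - \<theta>)"
        have c0: "0 \<le> c" unfolding c_def using D0 \<theta> by simp
        have y0: "0 \<le> y" unfolding y_def using \<theta> by simp
        have "D * \<theta>^M / (1 - \<theta>) = c * y" unfolding c_def y_def by simp
        moreover have "D * \<theta>^M * (2 + 2 / (1 - \<theta>)) = 2 * c + 2 * (c * y)" unfolding c_def y_def by (simp add: algebra_simps)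
        moreover have "0 \<le> c * y" using c0 y0 by simp
        ultimately show ?thesis using c0 by linarith
      qed
      finally show ?thesis using M by simp
    qed
    then show "\<exists>M. \<forall>m\<ge>M. \<forall>n\<ge>M. norm (b m - b n) < e" by blast
  qed
  then have "b \<longlonglongrightarrow> lim b" by (simp add: Cauchy_convergent_iff convergent_LIMSEQ_iff)
  define L where "L = lim b"
  have bL: "b \<longlonglongrightarrow> L" unfolding L_def by fact
  have tail: "\<bar>b k - L\<bar> \<le> D * \<theta>^k / (1 - \<theta>)" if "K0 \<le> k" for k
  proof -
    have "(\<lambda>m. \<bar>b m - b k\<bar>) \<longlonglongrightarrow> \<bar>L - b k\<bar>" by (intro tendsto_intros bL)
    then have "\<bar>L - b k\<bar> \<le> D * \<theta>^k / (1 - \<theta>)"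
      by (rule LIMSEQ_le_const2) (use chain2 that in auto)
    then show ?thesis by (simp add: abs_minus_commute)
  qed
  have findk: "\<exists>k\<ge>k1. r (Suc k) < \<rho> \<and> \<rho> \<le> r k" if "0 < \<rho>" "\<rho> < r k1" for \<rho> k1
  proof -
    have "(\<lambda>j. R0 * (1/2)^j) \<longlonglongrightarrow> R0 * 0" by (intro tendsto_mult_left LIMSEQ_power_zero) simp
    then have "eventually (\<lambda>j. R0 * (1/2)^j < \<rho>) sequentially" using that by (auto dest: order_tendstoD(2))
    then obtain j where "R0 * (1/2)^j < \<rho>" by (auto simp: eventually_sequentially)
    then have ex: "\<exists>j. r j < \<rho>" unfolding r_def by (auto simp: field_simps)
    define j0 where "j0 = (LEAST j. r j < \<rho>)"
    have j0: "r j0 < \<rho>" unfolding j0_def by (rule LeastI_ex[OF ex])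
    have "k1 < j0"
    proof (rule ccontr)
      assume "\<not> k1 < j0"
      then have "r k1 \<le> r j0" by (intro rmono) simp
      with j0 that show False by simp
    qed
    then obtain k where k: "j0 = Suc k" "k1 \<le> k" by (cases j0) auto
    have "\<not> r k < \<rho>" using not_less_Least[of k "\<lambda>j. r j < \<rho>"] k unfolding j0_def by simp
    then show ?thesis using k j0 by (intro exI[of _ k]) auto
  qed
  have "(a \<longlongrightarrow> L) (at_right 0)"
  proof (rule tendstoI)
    fix e :: real assume e: "0 < e"
    from ev[OF e] obtain k1 where k1: "k1 \<ge> K0" "D * \<theta>^k1 * (2 + 2 / (1 - \<theta>)) < e" by blast
    show "eventually (\<lambda>\<rho>. dist (a \<rho>) L < e) (at_right 0)"
      unfolding eventually_at_right_field
    proof (intro exI[of _ "r k1"] conjI allI impI)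
      show "0 < r k1" by (rule rpos)
      fix \<rho> :: real assume "0 < \<rho>" "\<rho> < r k1"
      from findk[OF this] obtain k where k: "k \<ge> k1" "r (Suc k) < \<rho>" "\<rho> \<le> r k" by blast
      have "dist (a \<rho>) L \<le> \<bar>a \<rho> - b k\<bar> + \<bar>b k - L\<bar>" by (simp add: dist_real_def)
      also have "\<dots> \<le> D * \<theta>^k + D * \<theta>^k / (1 - \<theta>)"
        using est[of k \<rho>] tail[of k] k k1 rSuc[of k] by (intro add_mono) auto
      also have "\<dots> \<le> D * \<theta>^k1 + D * \<theta>^k1 / (1 - \<theta>)"
      proof -
        have "\<theta>^k \<le> \<theta>^k1" using k \<theta> by (intro power_decreasing) auto
        then show ?thesis using D0 \<theta> by (intro add_mono mult_left_mono divide_right_mono) auto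
      qed
      also have "\<dots> \<le> D * \<theta>^k1 * (2 + 2 / (1 - \<theta>))"
      proof -
        define c where "c = D * \<theta>^k1"
        define y where "y = 1 / (1 - \<theta>)"
        have c0: "0 \<le> c" unfolding c_def using D0 \<theta> by simp
        have y0: "0 \<le> y" unfolding y_def using \<theta> by simp
        have "D * \<theta>^k1 / (1 - \<theta>) = c * y" unfolding c_def y_def by simp
        moreover have "D * \<theta>^k1 * (2 + 2 / (1 - \<theta>)) = 2 * c + 2 * (c * y)" unfolding c_def y_def by (simp add: algebra_simps)
        moreover have "0 \<le> c * y" using c0 y0 by simp
        ultimately show ?thesis using c0 unfolding c_def[symmetric] by linarith
      qed
      also have "\<dots> < e" by (fact k1(2))
      finally show "dist (a \<rho>) L < e" .
    qed
  qed
  then show ?thesis unfolding a_def by blast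
qed

end

lemma hausdorff_empty: "hausdorff_measure t ({}::'a::metric_space set) = 0"
proof -
  have "hausdorff_pre t \<delta> ({}::'a set) = 0" if "0 < \<delta>" for \<delta>
  proof -
    have "hausdorff_pre t \<delta> ({}::'a set) \<le> (\<Sum>i. ennreal (diameter ((\<lambda>i::nat. {}::'a set) i) powr t))"
      unfolding hausdorff_pre_def
      by (rule Inf_lower, rule CollectI, rule exI[of _ "\<lambda>i::nat. {}::'a set"]) (use that in simp)
    then show ?thesis by simp
  qed
  then have "(SUP \<delta>\<in>{0<..}. hausdorff_pre t \<delta> ({}::'a set)) = (SUP \<delta>\<in>({0<..}::real set). (0::ennreal))"
    by (intro SUP_cong) auto
  then show ?thesis unfolding hausdorff_measure_def by simp
qed

theorem lemma5p2:
  fixes \<mu> :: "'a::metric_space measure" and n s :: real and u :: "'a \<Rightarrow> real"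
  assumes "mm_space \<mu>" and "ahlfors_regular \<mu> n" and "n > 0"
    and "0 < s" and "s < n"
    and "u \<in> besov \<mu> s (n / s)"
  shows "\<exists>F. hausdorff_dim_zero (UNIV - F) \<and>
           (\<forall>x\<in>F. \<exists>L. ((\<lambda>r. ball_avg \<mu> u x r) \<longlongrightarrow> L) (at_right 0))"
proof (cases "\<forall>x y::'a. x = y")
  case True
  show ?thesis
  proof (intro exI[of _ UNIV] conjI ballI)
    show "hausdorff_dim_zero (UNIV - (UNIV::'a set))" unfolding hausdorff_dim_zero_def
      by (simp add: hausdorff_empty)
    fix x :: 'a
    have "eventually (\<lambda>r. ball_avg \<mu> u x r = ball_avg \<mu> u x 1) (at_right 0)"
      unfolding eventually_at_right_field
    proof (intro exI[of _ 1] conjI allI impI)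
      fix r :: real assume "0 < r" "r < 1"
      have "ball x r = ball x 1"
      proof (intro set_eqI)
        fix z :: 'a
        have "z = x" using True by blast
        then show "z \<in> ball x r \<longleftrightarrow> z \<in> ball x 1" using \<open>0 < r\<close> by simp
      qed
      then show "ball_avg \<mu> u x r = ball_avg \<mu> u x 1" unfolding ball_avg_def by simp
    qed simp
    then show "\<exists>L. ((\<lambda>r. ball_avg \<mu> u x r) \<longlongrightarrow> L) (at_right 0)"
      by (intro exI[of _ "ball_avg \<mu> u x 1"]) (simp add: tendsto_eventually)
  qed
next
  case False
  then obtain x1 y1 :: 'a where xy1: "x1 \<noteq> y1" by blast
  define p where "p = n / s"
  have p1: "1 < p" unfolding p_def using assms by simp
  have sp: "s * p = n" unfolding p_def using assms by simp
  from assms(2) obtain C where C1: "C \<ge> 1" and AR: "\<And>x r. 0 < r \<Longrightarrow> (\<not> bounded (UNIV::'a set) \<or> r < 2 * diameter (UNIV::'a set))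
      \<Longrightarrow> r powr n / C \<le> measure \<mu> (ball x r) \<and> measure \<mu> (ball x r) \<le> C * r powr n"
    unfolding ahlfors_regular_def by blast
  obtain R0 where R0: "0 < R0" "R0 \<le> 1" and val: "\<And>r. 0 < r \<Longrightarrow> r \<le> 4*R0 \<Longrightarrow> \<not> bounded (UNIV::'a set) \<or> r < 2 * diameter (UNIV::'a set)"
  proof (cases "bounded (UNIV::'a set)")
    case False
    then show ?thesis using that[of "1/4"] by simp
  next
    case True
    have "0 < dist x1 y1" using xy1 by simp
    also have "dist x1 y1 \<le> diameter (UNIV::'a set)" by (rule diameter_bounded_bound[OF True]) auto
    finally have D: "0 < diameter (UNIV::'a set)" .
    show ?thesis
      by (rule that[of "min (1/4) (diameter (UNIV::'a set) / 4)"]) (use D in auto)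
  qed
  have mm: "sets \<mu> = sets borel" "\<And>x r. r > 0 \<Longrightarrow> emeasure \<mu> (ball x r) < \<infinity>"
    using assms(1) unfolding mm_space_def by auto
  have uL: "Lp_loc \<mu> (n/s) u" and uB: "(\<integral>\<^sup>+ x. (\<integral>\<^sup>+ y. ennreal (\<bar>u x - u y\<bar> powr (n/s) / (dist x y powr (s * (n/s)) * V \<mu> x y)) \<partial>\<mu>) \<partial>\<mu>) < \<infinity>"
    using assms(6) unfolding besov_def by auto
  interpret ARu \<mu> C R0 n u p s
  proof
    show "sets \<mu> = sets borel" by (fact mm(1))
    show "\<And>x r. r > 0 \<Longrightarrow> emeasure \<mu> (ball x r) < \<infinity>" by (fact mm(2))
    show "C \<ge> 1" by (fact C1)
    show "0 < R0" "R0 \<le> 1" by (fact R0)+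
    show "n > 0" by (fact assms(3))
    show "\<And>x r. 0 < r \<Longrightarrow> r \<le> 4*R0 \<Longrightarrow> r powr n / C \<le> measure \<mu> (ball x r)"
      using AR val by blast
    show "\<And>x r. 0 < r \<Longrightarrow> r \<le> 4*R0 \<Longrightarrow> measure \<mu> (ball x r) \<le> C * r powr n"
      using AR val by blast
    show "u \<in> borel_measurable \<mu>" using uL unfolding Lp_loc_def by simp
    show "1 < p" by (fact p1)
    show "s * p = n" by (fact sp)
    show "\<And>x r. r > 0 \<Longrightarrow> (\<integral>\<^sup>+ y. ennreal (\<bar>u y\<bar> powr p) * indicator (ball x r) y \<partial>\<mu>) < \<infinity>"
      using uL unfolding Lp_loc_def p_def by simp
  qed
  have I: "(\<integral>\<^sup>+ y. \<integral>\<^sup>+ z. ennreal (gfun \<mu> u p s y z) \<partial>\<mu> \<partial>\<mu>) < \<infinity>"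
    using uB unfolding gfun_def p_def .
  define F where "F = {x. \<exists>L. ((\<lambda>r. ball_avg \<mu> u x r) \<longlongrightarrow> L) (at_right 0)}"
  show ?thesis
  proof (intro exI[of _ F] conjI ballI)
    show "hausdorff_dim_zero (UNIV - F)" unfolding hausdorff_dim_zero_def
    proof (intro allI impI)
      fix t :: real assume t: "0 < t"
      have sub: "UNIV - F \<subseteq> {x. \<forall>K. \<exists>k\<ge>K. Eg \<mu> u p s x (R0 / 2^k) > ennreal ((R0 / 2^k) powr (t/2))}"
      proof
        fix x assume x: "x \<in> UNIV - F"
        show "x \<in> {x. \<forall>K. \<exists>k\<ge>K. Eg \<mu> u p s x (R0 / 2^k) > ennreal ((R0 / 2^k) powr (t/2))}"
        proof (rule ccontr)
          assume "x \<notin> {x. \<forall>K. \<exists>k\<ge>K. Eg \<mu> u p s x (R0 / 2^k) > ennreal ((R0 / 2^k) powr (t/2))}"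
          then obtain K0 where "\<forall>k\<ge>K0. Eg \<mu> u p s x (R0 / 2^k) \<le> ennreal ((R0 / 2^k) powr (t/2))"
            by (auto simp: not_less)
          then have "\<exists>L. ((\<lambda>r. ball_avg \<mu> u x r) \<longlongrightarrow> L) (at_right 0)"
            using t by (intro limit_exists[of "t/2" K0]) auto
          then show False using x unfolding F_def by simp
        qed
      qed
      have "hausdorff_measure (2*(t/2)) (UNIV - F) = 0"
        by (rule cover_zero[OF I]) (use t sub in auto)
      then show "hausdorff_measure t (UNIV - F) = 0" by simp
    qed
  qed (simp add: F_def)
qed


end
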